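(* Let $\mathcal{P}=\langle P,\le\rangle$ be a finite bounded poset with $|P|\ge 2$, and let $R^+(\mathcal{P})$ be its interval rank poset. Then the width satisfies $\mathcal{W}(R^+(\mathcal{P}))\le\mathcal{W}(\mathcal{P})$.
   Context: A poset is bounded if it has a least and a greatest element. The height $H$ of a finite poset is the number of elements in its largest chain; the width $\mathcal{W}$ is the size of its largest antichain. For $a\in P$, $\uparrow a=\{b:b\ge a\}$ and $\downarrow a=\{b:b\le a\}$ as subposets. The standard interval rank is $R^+(a)=[H(\uparrow a)-1,\;H(\mathcal{P})-H(\downarrow a)]$. The interval rank poset $R^+(\mathcal{P})$ is the set $\{R^+(a):a\in P\}$ of intervals ordered by $\ge_W$, where $[x_*,x^*]\le_W[y_*,y^*]$ iff $x_*\le y_*$ and $x^*\le y^*$. *)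

theory Defs
  imports Main
begin

definition is_poset :: "'a set \<Rightarrow> ('a \<Rightarrow> 'a \<Rightarrow> bool) \<Rightarrow> bool" where
  "is_poset P le \<longleftrightarrow>
     (\<forall>x\<in>P. le x x) \<and>
     (\<forall>x\<in>P. \<forall>y\<in>P. le x y \<and> le y x \<longrightarrow> x = y) \<and>
     (\<forall>x\<in>P. \<forall>y\<in>P. \<forall>z\<in>P. le x y \<and> le y z \<longrightarrow> le x z)"

definition bounded_poset :: "'a set \<Rightarrow> ('a \<Rightarrow> 'a \<Rightarrow> bool) \<Rightarrow> bool" where
  "bounded_poset P le \<longleftrightarrow>
     (\<exists>b\<in>P. \<forall>x\<in>P. le b x) \<and> (\<exists>t\<in>P. \<forall>x\<in>P. le x t)"

definition is_chain :: "'a set \<Rightarrow> ('a \<Rightarrow> 'a \<Rightarrow> bool) \<Rightarrow> 'a set \<Rightarrow> bool" where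
  "is_chain P le C \<longleftrightarrow> C \<subseteq> P \<and> (\<forall>x\<in>C. \<forall>y\<in>C. le x y \<or> le y x)"

definition is_antichain :: "'a set \<Rightarrow> ('a \<Rightarrow> 'a \<Rightarrow> bool) \<Rightarrow> 'a set \<Rightarrow> bool" where
  "is_antichain P le A \<longleftrightarrow> A \<subseteq> P \<and> (\<forall>x\<in>A. \<forall>y\<in>A. le x y \<longrightarrow> x = y)"

text \<open>Height: number of elements of a largest chain; width: size of a largest antichain
  (meant for finite carriers).\<close>

definition height :: "'a set \<Rightarrow> ('a \<Rightarrow> 'a \<Rightarrow> bool) \<Rightarrow> nat" where
  "height P le = Max (card ` {C. is_chain P le C})"

definition width :: "'a set \<Rightarrow> ('a \<Rightarrow> 'a \<Rightarrow> bool) \<Rightarrow> nat" where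
  "width P le = Max (card ` {A. is_antichain P le A})"

definition up_set :: "'a set \<Rightarrow> ('a \<Rightarrow> 'a \<Rightarrow> bool) \<Rightarrow> 'a \<Rightarrow> 'a set" where
  "up_set P le a = {b\<in>P. le a b}"

definition down_set :: "'a set \<Rightarrow> ('a \<Rightarrow> 'a \<Rightarrow> bool) \<Rightarrow> 'a \<Rightarrow> 'a set" where
  "down_set P le a = {b\<in>P. le b a}"

text \<open>Standard interval rank R+(a) = [H(up a) - 1, H(P) - H(down a)], as a pair of endpoints.
  The subtractions never truncate: H(up a) \<ge> 1 and H(down a) \<le> H(P).\<close>

definition interval_rank :: "'a set \<Rightarrow> ('a \<Rightarrow> 'a \<Rightarrow> bool) \<Rightarrow> 'a \<Rightarrow> nat \<times> nat" where
  "interval_rank P le a =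
     (height (up_set P le a) le - 1, height P le - height (down_set P le a) le)"

definition interval_le :: "nat \<times> nat \<Rightarrow> nat \<times> nat \<Rightarrow> bool" where
  "interval_le x y \<longleftrightarrow> fst x \<le> fst y \<and> snd x \<le> snd y"

definition interval_rank_set :: "'a set \<Rightarrow> ('a \<Rightarrow> 'a \<Rightarrow> bool) \<Rightarrow> (nat \<times> nat) set" where
  "interval_rank_set P le = interval_rank P le ` P"

end

theory Submission
  imports Defs
begin

lemma chains_finite: "finite S \<Longrightarrow> finite {C. is_chain S le C}"
  by (rule finite_subset[of _ "Pow S"]) (auto simp: is_chain_def)

lemma height_ge: "finite S \<Longrightarrow> is_chain S le C \<Longrightarrow> card C \<le> height S le"
  unfolding height_def by (rule Max_ge) (auto intro: chains_finite)

lemma height_attained: "finite S \<Longrightarrow> \<exists>C. is_chain S le C \<and> card C = height S le"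
proof -
  assume f: "finite S"
  have "{} \<in> {C. is_chain S le C}" by (simp add: is_chain_def)
  hence "height S le \<in> card ` {C. is_chain S le C}"
    unfolding height_def using chains_finite[OF f] by (intro Max_in) auto
  thus ?thesis by auto
qed

lemma antichains_finite: "finite S \<Longrightarrow> finite {C. is_antichain S le C}"
  by (rule finite_subset[of _ "Pow S"]) (auto simp: is_antichain_def)

lemma width_ge: "finite S \<Longrightarrow> is_antichain S le C \<Longrightarrow> card C \<le> width S le"
  unfolding width_def by (rule Max_ge) (auto intro: antichains_finite)

lemma fst_strict:
  assumes fin: "finite P" and po: "is_poset P le" and a: "a \<in> P" and b: "b \<in> P"
    and ab: "le a b" and ne: "a \<noteq> b"
  shows "fst (interval_rank P le b) < fst (interval_rank P le a)"
proof -
  have fa: "finite (up_set P le a)" and fb: "finite (up_set P le b)"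
    using fin by (auto simp: up_set_def)
  obtain C where C: "is_chain (up_set P le b) le C" "card C = height (up_set P le b) le"
    using height_attained[OF fb] by blast
  have fC: "finite C" using C(1) fb by (auto simp: is_chain_def intro: finite_subset)
  have aC: "a \<notin> C"
  proof
    assume "a \<in> C"
    hence "le b a" using C(1) by (auto simp: is_chain_def up_set_def)
    thus False using po a b ab ne unfolding is_poset_def by blast
  qed
  have ch: "is_chain (up_set P le a) le (insert a C)"
    using C(1) po a b ab unfolding is_chain_def up_set_def is_poset_def by blast
  have "card (insert a C) \<le> height (up_set P le a) le" by (rule height_ge[OF fa ch])
  hence h1: "height (up_set P le b) le + 1 \<le> height (up_set P le a) le"
    using C(2) fC aC by simp
  have "is_chain (up_set P le b) le {b}"
    using po b unfolding is_chain_def up_set_def is_poset_def by auto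
  hence "1 \<le> height (up_set P le b) le" using height_ge[OF fb] by fastforce
  thus ?thesis using h1 by (simp add: interval_rank_def)
qed

lemma snd_mono:
  assumes fin: "finite P" and po: "is_poset P le" and a: "a \<in> P" and b: "b \<in> P"
    and ab: "le a b"
  shows "snd (interval_rank P le b) \<le> snd (interval_rank P le a)"
proof -
  have fb: "finite (down_set P le b)" using fin by (auto simp: down_set_def)
  obtain C where C: "is_chain (down_set P le a) le C" "card C = height (down_set P le a) le"
    using height_attained[of "down_set P le a" le] fin by (auto simp: down_set_def)
  have "is_chain (down_set P le b) le C"
    using C(1) po a b ab unfolding is_chain_def down_set_def is_poset_def by blast
  hence "height (down_set P le a) le \<le> height (down_set P le b) le"
    using height_ge[OF fb] C(2) by metis
  thus ?thesis by (simp add: interval_rank_def diff_le_mono2)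
qed

theorem proposition6:
  fixes P :: "'a set" and le :: "'a \<Rightarrow> 'a \<Rightarrow> bool"
  assumes "finite P"
    and "is_poset P le"
    and "bounded_poset P le"
    and "card P \<ge> 2"
  shows "width (interval_rank_set P le) interval_le \<le> width P le"
proof -
  let ?R = "interval_rank P le"
  let ?S = "interval_rank_set P le"
  have finS: "finite ?S" using assms(1) by (simp add: interval_rank_set_def)
  have "\<forall>k \<in> card ` {A. is_antichain ?S interval_le A}. k \<le> width P le"
  proof
    fix k assume "k \<in> card ` {A. is_antichain ?S interval_le A}"
    then obtain A where A: "is_antichain ?S interval_le A" and k: "k = card A" by auto
    define f where "f = inv_into P ?R"
    have AS: "A \<subseteq> ?R ` P" using A by (simp add: is_antichain_def interval_rank_set_def)
    have fP: "\<And>x. x \<in> A \<Longrightarrow> f x \<in> P" using AS unfolding f_def by (auto intro: inv_into_into)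
    have Rf: "\<And>x. x \<in> A \<Longrightarrow> ?R (f x) = x" using AS unfolding f_def by (auto intro: f_inv_into_f)
    have inj: "inj_on f A" by (metis inj_onI Rf)
    have "is_antichain P le (f ` A)"
      unfolding is_antichain_def
    proof (intro conjI ballI impI)
      show "f ` A \<subseteq> P" using fP by auto
    next
      fix u v assume u: "u \<in> f ` A" and v: "v \<in> f ` A" and uv: "le u v"
      then obtain x y where x: "x \<in> A" "u = f x" and y: "y \<in> A" "v = f y" by auto
      show "u = v"
      proof (rule ccontr)
        assume ne: "u \<noteq> v"
        have "fst (?R v) < fst (?R u)"
          using fst_strict[OF assms(1,2)] fP x y uv ne by blast
        moreover have "snd (?R v) \<le> snd (?R u)"
          using snd_mono[OF assms(1,2)] fP x y uv by blast
        ultimately have "interval_le y x" "y \<noteq> x"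
          using Rf x y by (auto simp: interval_le_def)
        thus False using A x y by (auto simp: is_antichain_def)
      qed
    qed
    hence "card (f ` A) \<le> width P le" by (rule width_ge[OF assms(1)])
    thus "k \<le> width P le" using k card_image[OF inj] by simp
  qed
  moreover have "{} \<in> {A. is_antichain ?S interval_le A}" by (simp add: is_antichain_def)
  ultimately show ?thesis unfolding width_def[of ?S]
    using antichains_finite[OF finS] by (subst Max_le_iff) auto
qed

end
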